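(* Let $f_1,f_2$ be strongly hyperbolic functions. Any two distinct elements $C,D\in\mathcal{C}^-(f_1,f_2)$ have at most two points in common.
   Context: Identify $\mathbb{S}^1$ with $\mathbb{R}\cup\{\infty\}$, $\mathcal{P}=\mathbb{S}^1\times\mathbb{S}^1$, $\mathbb{R}^+=(0,\infty)$. A function $f:\mathbb{R}^+\to\mathbb{R}^+$ is strongly hyperbolic if: (1) $\lim_{x\to0+}f(x)=+\infty$, $\lim_{x\to+\infty}f(x)=0$; (2) $f$ strictly convex; (3) $\lim_{x\to+\infty}f(x+b)/f(x)=1$ for each $b\in\mathbb{R}$; (4) $f$ differentiable; (5) $\ln|f'|$ strictly convex. For $a>0$, $b,c\in\mathbb{R}$: $f_{a,b,c}(x)=af_1(x+b)+c$ for $x>-b$, $f_{a,b,c}(x)=-af_2(-x-b)+c$ for $x<-b$; $\overline{f_{a,b,c}}=\{(x,f_{a,b,c}(x)):x\ne-b\}\cup\{(-b,\infty),(\infty,c)\}$; $\overline{l_{s,t}}=\{(x,sx+t):x\in\mathbb{R}\}\cup\{(\infty,\infty)\}$; $\mathcal{C}^-(f_1,f_2)=\{\overline{f_{a,b,c}}:a>0,b,c\in\mathbb{R}\}\cup\{\overline{l_{s,t}}:s<0,t\in\mathbb{R}\}$, a set of subsets of $\mathcal{P}$. *)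

theory Defs
  imports "HOL-Analysis.Analysis"
begin

text \<open>The circle S^1 identified with R together with one point at infinity.\<close>
datatype circ = Fin real | Infty

definition strictly_convex_on :: "real set \<Rightarrow> (real \<Rightarrow> real) \<Rightarrow> bool" where
  "strictly_convex_on S f \<longleftrightarrow> convex S \<and>
     (\<forall>x\<in>S. \<forall>y\<in>S. \<forall>u::real. x \<noteq> y \<and> 0 < u \<and> u < 1 \<longrightarrow>
        f (u * x + (1 - u) * y) < u * f x + (1 - u) * f y)"

text \<open>Strongly hyperbolic functions R+ -> R+ (only values on (0,inf) matter).\<close>
definition strongly_hyperbolic :: "(real \<Rightarrow> real) \<Rightarrow> bool" where
  "strongly_hyperbolic f \<longleftrightarrow>
     (\<forall>x>0. f x > 0) \<and>
     filterlim f at_top (at_right 0) \<and>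
     (f \<longlongrightarrow> 0) at_top \<and>
     strictly_convex_on {0<..} f \<and>
     (\<forall>b::real. ((\<lambda>x. f (x + b) / f x) \<longlongrightarrow> 1) at_top) \<and>
     (\<forall>x>0. f differentiable (at x)) \<and>
     strictly_convex_on {0<..} (\<lambda>x. ln \<bar>deriv f x\<bar>)"

definition f_abc :: "(real \<Rightarrow> real) \<Rightarrow> (real \<Rightarrow> real) \<Rightarrow> real \<Rightarrow> real \<Rightarrow> real \<Rightarrow> real \<Rightarrow> real" where
  "f_abc f1 f2 a b c x = (if x > - b then a * f1 (x + b) + c else - a * f2 (- x - b) + c)"

definition graph_abc :: "(real \<Rightarrow> real) \<Rightarrow> (real \<Rightarrow> real) \<Rightarrow> real \<Rightarrow> real \<Rightarrow> real \<Rightarrow> (circ \<times> circ) set" where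
  "graph_abc f1 f2 a b c =
     {(Fin x, Fin (f_abc f1 f2 a b c x)) | x. x \<noteq> - b} \<union> {(Fin (- b), Infty), (Infty, Fin c)}"

definition line_st :: "real \<Rightarrow> real \<Rightarrow> (circ \<times> circ) set" where
  "line_st s t = {(Fin x, Fin (s * x + t)) | x. True} \<union> {(Infty, Infty)}"

definition Cminus :: "(real \<Rightarrow> real) \<Rightarrow> (real \<Rightarrow> real) \<Rightarrow> (circ \<times> circ) set set" where
  "Cminus f1 f2 = {graph_abc f1 f2 a b c | a b c. a > 0}
                  \<union> {line_st s t | s t. s < 0}"

end

theory Submission
  imports Defs
begin


lemma rolle_max:
  fixes F F' :: "real \<Rightarrow> real"
  assumes der: "\<And>t. x \<le> t \<Longrightarrow> t \<le> z \<Longrightarrow> (F has_real_derivative F' t) (at t)"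
    and xy: "x < y" and yz: "y < z" and h1: "F x < F y" and h2: "F z < F y"
  shows "\<exists>m. x < m \<and> m < z \<and> F y \<le> F m \<and> F' m = 0"
proof -
  have cont: "continuous_on {x..z} F"
    by (rule DERIV_atLeastAtMost_imp_continuous_on) (use der in blast)
  obtain m where m: "m \<in> {x..z}" and mx: "\<forall>t\<in>{x..z}. F t \<le> F m"
    using continuous_attains_sup[OF compact_Icc _ cont] xy yz by auto
  have "F y \<le> F m" using mx xy yz by auto
  hence "m \<noteq> x" "m \<noteq> z" using h1 h2 by auto
  hence m1: "x < m" "m < z" using m by auto
  have "F' m = 0"
  proof (rule DERIV_local_max)
    show "(F has_real_derivative F' m) (at m)" using der m1 by auto
    show "0 < min (m - x) (z - m)" using m1 by auto
    show "\<forall>t. \<bar>m - t\<bar> < min (m - x) (z - m) \<longrightarrow> F t \<le> F m"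
    proof (intro allI impI)
      fix t assume "\<bar>m - t\<bar> < min (m - x) (z - m)"
      hence "t \<in> {x..z}" by (auto simp: abs_less_iff)
      thus "F t \<le> F m" using mx by auto
    qed
  qed
  thus ?thesis using m1 \<open>F y \<le> F m\<close> by auto
qed

lemma rolle_min:
  fixes F F' :: "real \<Rightarrow> real"
  assumes der: "\<And>t. x \<le> t \<Longrightarrow> t \<le> z \<Longrightarrow> (F has_real_derivative F' t) (at t)"
    and xy: "x < y" and yz: "y < z" and h1: "F y < F x" and h2: "F y < F z"
  shows "\<exists>m. x < m \<and> m < z \<and> F m \<le> F y \<and> F' m = 0"
proof -
  have "\<exists>m. x < m \<and> m < z \<and> - F y \<le> - F m \<and> - F' m = 0"
    by (rule rolle_max[of x z "\<lambda>t. - F t" "\<lambda>t. - F' t" y])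
       (use der xy yz h1 h2 in \<open>auto intro: DERIV_minus\<close>)
  thus ?thesis by auto
qed

lemma four_point:
  fixes F F' :: "real \<Rightarrow> real"
  assumes der: "\<And>t. xa \<le> t \<Longrightarrow> t \<le> xd \<Longrightarrow> (F has_real_derivative F' t) (at t)"
    and o: "xa < xb" "xb < xc" "xc < xd"
    and v: "F xa < 0" "F xb = 0" "F xc = 0" "0 < F xd"
  shows "\<exists>p q. xa < p \<and> p < xd \<and> xa < q \<and> q < xd \<and> p \<noteq> q \<and> F' p = 0 \<and> F' q = 0"
proof (cases "\<exists>w. xb < w \<and> w < xc \<and> F w \<noteq> 0")
  case True
  then obtain w where w: "xb < w" "w < xc" "F w \<noteq> 0" by auto
  show ?thesis
  proof (cases "F w > 0")
    case True
    obtain p where p: "xb < p" "p < xc" "F w \<le> F p" "F' p = 0"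
      using rolle_max[of xb xc F F' w] der o v w True by auto
    obtain q where q: "w < q" "q < xd" "F q \<le> F xc" "F' q = 0"
      using rolle_min[of w xd F F' xc] der o v w True by auto
    show ?thesis
      by (rule exI[of _ p], rule exI[of _ q]) (use p q o v w True in auto)
  next
    case False
    hence Fw: "F w < 0" using w by auto
    obtain p where p: "xb < p" "p < xc" "F p \<le> F w" "F' p = 0"
      using rolle_min[of xb xc F F' w] der o v w Fw by auto
    obtain q where q: "xa < q" "q < w" "F xb \<le> F q" "F' q = 0"
      using rolle_max[of xa w F F' xb] der o v w Fw by auto
    show ?thesis
      by (rule exI[of _ p], rule exI[of _ q]) (use p q o v w Fw in auto)
  qed
next
  case False
  hence z: "\<And>w. xb < w \<Longrightarrow> w < xc \<Longrightarrow> F w = 0" by auto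
  have crit: "F' m = 0" if "xb < m" "m < xc" for m
  proof (rule DERIV_local_max)
    show "(F has_real_derivative F' m) (at m)" using der that o by auto
    show "0 < min (m - xb) (xc - m)" using that by auto
    show "\<forall>t. \<bar>m - t\<bar> < min (m - xb) (xc - m) \<longrightarrow> F t \<le> F m"
      using z that by (auto simp: abs_if split: if_splits)
  qed
  show ?thesis
    by (rule exI[of _ "(2*xb+xc)/3"], rule exI[of _ "(xb+2*xc)/3"])
       (use o crit in auto)
qed



lemma sc_chord:
  assumes sc: "strictly_convex_on {0<..} f" and p: "0 < p" "p < q" "q < r"
  shows "f q * (r - p) < (r - q) * f p + (q - p) * f r"
proof -
  define u where "u = (r - q) / (r - p)"
  have u: "0 < u" "u < 1" using p by (auto simp: u_def field_simps)
  have e: "u * (r - p) = r - q" using p by (simp add: u_def)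
  have qq: "q = u * p + (1 - u) * r" using e by (simp add: algebra_simps)
  have "f (u * p + (1 - u) * r) < u * f p + (1 - u) * f r"
    using sc p u unfolding strictly_convex_on_def by auto
  hence "f q < u * f p + (1 - u) * f r" using qq by simp
  hence "f q * (r - p) < (u * f p + (1 - u) * f r) * (r - p)"
    using p by (intro mult_strict_right_mono) auto
  also have "\<dots> = (u * (r - p)) * f p + ((r - p) - u * (r - p)) * f r"
    by (simp add: algebra_simps)
  also have "\<dots> = (r - q) * f p + (q - p) * f r"
    by (simp only: e) (simp add: algebra_simps)
  finally show ?thesis .
qed

lemma sc_slope_shift:
  assumes sc: "strictly_convex_on {0<..} g" and d: "0 < d" and uv: "0 < u" "u < v"
  shows "g (u + d) - g u < g (v + d) - g v"
proof -
  have c1: "g (u + d) * ((v + d) - u) < ((v + d) - (u + d)) * g u + ((u + d) - u) * g (v + d)"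
    using sc_chord[OF sc, of u "u + d" "v + d"] d uv by auto
  have c2: "g v * ((v + d) - u) < ((v + d) - v) * g u + (v - u) * g (v + d)"
    using sc_chord[OF sc, of u v "v + d"] d uv by auto
  have "(g (u + d) - g u) * (v + d - u) < (g (v + d) - g u) * d"
    using c1 by (simp add: algebra_simps)
  moreover have "(g (v + d) - g u) * d < (g (v + d) - g v) * (v + d - u)"
    using c2 by (simp add: algebra_simps)
  ultimately have "(g (u + d) - g u) * (v + d - u) < (g (v + d) - g v) * (v + d - u)"
    by linarith
  thus ?thesis using d uv by (simp add: mult_less_cancel_right)
qed

lemma sh_pos: "strongly_hyperbolic f \<Longrightarrow> 0 < x \<Longrightarrow> 0 < f x"
  unfolding strongly_hyperbolic_def by auto

lemma sh_sc: "strongly_hyperbolic f \<Longrightarrow> strictly_convex_on {0<..} f"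
  unfolding strongly_hyperbolic_def by auto

lemma sh_decr:
  assumes sh: "strongly_hyperbolic f" and p: "0 < p" "p < q"
  shows "f q < f p"
proof (rule ccontr)
  assume "\<not> f q < f p"
  hence fpq: "f p \<le> f q" by auto
  have big: "f q < f r" if "q < r" for r
  proof -
    have "f q * (r - p) < (r - q) * f p + (q - p) * f r"
      using sc_chord[OF sh_sc[OF sh], of p q r] p that by auto
    also have "\<dots> \<le> (r - q) * f q + (q - p) * f r"
      using fpq that by (intro add_right_mono mult_left_mono) auto
    finally have "f q * (q - p) < (q - p) * f r" by (simp add: algebra_simps)
    thus ?thesis using p by (simp add: mult.commute)
  qed
  have lim: "(f \<longlongrightarrow> 0) at_top" using sh unfolding strongly_hyperbolic_def by auto
  have "0 < f q" using sh_pos[OF sh] p by auto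
  hence "eventually (\<lambda>x. f x < f q) at_top" using order_tendstoD(2)[OF lim] by auto
  then obtain N where N: "\<And>x. x \<ge> N \<Longrightarrow> f x < f q" by (auto simp: eventually_at_top_linorder)
  have "f (max N (q + 1)) < f q" using N by auto
  moreover have "f q < f (max N (q + 1))" using big by auto
  ultimately show False by auto
qed

lemma sh_deriv:
  assumes sh: "strongly_hyperbolic f" and x: "0 < x"
  shows "(f has_real_derivative deriv f x) (at x)"
proof -
  have "f differentiable (at x)" using sh x unfolding strongly_hyperbolic_def by auto
  thus ?thesis using DERIV_deriv_iff_real_differentiable by blast
qed

lemma sh_deriv_neg:
  assumes sh: "strongly_hyperbolic f" and x: "0 < x"
  shows "deriv f x < 0"
proof -
  define y where "y = x + 1"
  define S where "S = (f y - f x) / (y - x)"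
  have S: "S < 0" using sh_decr[OF sh x, of y] by (simp add: S_def y_def)
  have lim: "((\<lambda>z. (f z - f x) / (z - x)) \<longlongrightarrow> deriv f x) (at_right x)"
    using sh_deriv[OF sh x] unfolding has_field_derivative_iff
    by (simp add: filterlim_at_split)
  have ev: "eventually (\<lambda>z. (f z - f x) / (z - x) \<le> S) (at_right x)"
    unfolding eventually_at_right_field
  proof (intro exI[of _ y] conjI allI impI)
    show "x < y" by (simp add: y_def)
    fix z assume z: "x < z" "z < y"
    have "f z * (y - x) < (y - z) * f x + (z - x) * f y"
      using sc_chord[OF sh_sc[OF sh], of x z y] x z by auto
    hence "(f z - f x) * (y - x) < (f y - f x) * (z - x)" by (simp add: algebra_simps)
    thus "(f z - f x) / (z - x) \<le> S" using z
      by (simp add: S_def divide_simps)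
  qed
  have "deriv f x \<le> S"
    by (rule tendsto_upperbound[OF lim ev]) simp
  thus ?thesis using S by auto
qed

lemma crit_unique:
  assumes sh: "strongly_hyperbolic f" and A: "0 < A" "0 < A'" and d: "0 < d"
    and u: "0 < u" "A * deriv f (u + d) = A' * deriv f u"
    and v: "0 < v" "A * deriv f (v + d) = A' * deriv f v"
  shows "u = v"
proof -
  define g where "g = (\<lambda>x. ln \<bar>deriv f x\<bar>)"
  have sc: "strictly_convex_on {0<..} g" using sh unfolding strongly_hyperbolic_def g_def by auto
  have key: "g (w + d) - g w = ln A' - ln A" if w: "0 < w" "A * deriv f (w + d) = A' * deriv f w" for w
  proof -
    have n1: "deriv f (w + d) \<noteq> 0" "deriv f w \<noteq> 0" using sh_deriv_neg[OF sh] w d by (smt (verit))+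
    have "\<bar>A * deriv f (w + d)\<bar> = \<bar>A' * deriv f w\<bar>" using w by simp
    hence "A * \<bar>deriv f (w + d)\<bar> = A' * \<bar>deriv f w\<bar>" using A by (simp add: abs_mult)
    hence "ln (A * \<bar>deriv f (w + d)\<bar>) = ln (A' * \<bar>deriv f w\<bar>)" by simp
    hence "ln A + g (w + d) = ln A' + g w" using A n1 by (simp add: ln_mult g_def)
    thus ?thesis by simp
  qed
  show ?thesis
  proof (rule ccontr)
    assume "u \<noteq> v"
    hence "u < v \<or> v < u" by auto
    thus False using sc_slope_shift[OF sc d] key[OF u] key[OF v] u v by fastforce
  qed
qed



lemma rolle_eq:
  fixes F F' :: "real \<Rightarrow> real"
  assumes der: "\<And>t. x \<le> t \<Longrightarrow> t \<le> z \<Longrightarrow> (F has_real_derivative F' t) (at t)"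
    and xz: "x < z" and e: "F x = F z"
  shows "\<exists>m. x < m \<and> m < z \<and> F' m = 0"
proof -
  have cont: "continuous_on {x..z} F"
    by (rule DERIV_atLeastAtMost_imp_continuous_on) (use der in blast)
  have dif: "F differentiable (at t)" if "x < t" "t < z" for t
    using der[of t] that by (auto simp: real_differentiable_def)
  obtain m where m: "x < m" "m < z" "DERIV F m :> 0"
    using Rolle[OF xz e cont dif] by blast
  have "F' m = 0" using DERIV_unique[OF der[of m] m(3)] m by auto
  thus ?thesis using m by auto
qed

lemma crit_after:
  fixes F F' :: "real \<Rightarrow> real"
  assumes der: "\<And>t. u \<le> t \<Longrightarrow> (F has_real_derivative F' t) (at t)"
    and F0: "F u = 0" and lim: "\<And>e. 0 < e \<Longrightarrow> \<exists>N. \<forall>x\<ge>N. \<bar>F x\<bar> < e"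
  shows "\<exists>m. u < m \<and> F' m = 0"
proof (cases "\<exists>w. u < w \<and> F w \<noteq> 0")
  case True
  then obtain w where w: "u < w" "F w \<noteq> 0" by auto
  obtain N where N: "\<forall>x\<ge>N. \<bar>F x\<bar> < \<bar>F w\<bar>" using lim[of "\<bar>F w\<bar>"] w by auto
  define w2 where "w2 = max N (w + 1)"
  have w2: "w < w2" "\<bar>F w2\<bar> < \<bar>F w\<bar>" using N by (auto simp: w2_def)
  have der': "\<And>t. u \<le> t \<Longrightarrow> t \<le> w2 \<Longrightarrow> (F has_real_derivative F' t) (at t)" using der by auto
  show ?thesis
  proof (cases "F w > 0")
    case True
    have "F w2 < F w" using w2 True by auto
    then obtain m where "u < m" "F' m = 0"
      using rolle_max[of u w2 F F' w, OF der'] w w2 F0 True by auto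
    thus ?thesis by auto
  next
    case False
    hence "F w < 0" using w by auto
    moreover have "F w < F w2" using w2 calculation by auto
    ultimately obtain m where "u < m" "F' m = 0"
      using rolle_min[of u w2 F F' w, OF der'] w w2 F0 by auto
    thus ?thesis by auto
  qed
next
  case False
  hence z: "\<And>w. u < w \<Longrightarrow> F w = 0" by auto
  have "F' (u + 1) = 0"
  proof (rule DERIV_local_max)
    show "(F has_real_derivative F' (u + 1)) (at (u + 1))" using der by auto
    show "(0::real) < 1" by simp
    show "\<forall>t. \<bar>u + 1 - t\<bar> < 1 \<longrightarrow> F t \<le> F (u + 1)"
      using z by (auto simp: abs_less_iff)
  qed
  thus ?thesis by (intro exI[of _ "u + 1"]) auto
qed

lemma shift_deriv:
  assumes sh: "strongly_hyperbolic f" and u: "0 < u + d"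
  shows "((\<lambda>u. f (u + d)) has_real_derivative deriv f (u + d)) (at u)"
proof -
  have "((\<lambda>u. f (u + d)) has_real_derivative deriv f (u + d) * 1) (at u)"
    by (rule DERIV_chain2[where f=f and g="\<lambda>u. u + d"]) (use sh_deriv[OF sh u] in \<open>auto intro!: derivative_eq_intros\<close>)
  thus ?thesis by simp
qed

lemma phi_deriv:
  assumes sh: "strongly_hyperbolic f" and u: "0 < u" and d: "0 < d"
  shows "((\<lambda>u. A * f (u + d) - A' * f u + K) has_real_derivative
           (A * deriv f (u + d) - A' * deriv f u)) (at u)"
  using shift_deriv[OF sh, of u d] sh_deriv[OF sh u] u d
  by (auto intro!: derivative_eq_intros)

lemma phi_tail:
  assumes sh: "strongly_hyperbolic f" and d: "0 < d" and e: "0 < e"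
  shows "\<exists>N>0. \<forall>x\<ge>N. \<bar>A * f (x + d) - A' * f x\<bar> < e"
proof -
  have lim: "(f \<longlongrightarrow> 0) at_top" using sh unfolding strongly_hyperbolic_def by auto
  define e' where "e' = e / (2 * (\<bar>A\<bar> + \<bar>A'\<bar> + 1))"
  have e': "0 < e'" using e by (simp add: e'_def)
  have "eventually (\<lambda>x. \<bar>f x\<bar> < e') at_top"
    using lim e' by (auto simp: tendsto_iff dist_real_def)
  then obtain N where N: "\<And>x. x \<ge> N \<Longrightarrow> \<bar>f x\<bar> < e'" by (auto simp: eventually_at_top_linorder)
  have "\<bar>A * f (x + d) - A' * f x\<bar> < e" if x: "x \<ge> max N 1" for x
  proof -
    have a1: "\<bar>f (x + d)\<bar> < e'" "\<bar>f x\<bar> < e'" using N x d by auto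
    have "\<bar>A * f (x + d) - A' * f x\<bar> \<le> \<bar>A\<bar> * \<bar>f (x + d)\<bar> + \<bar>A'\<bar> * \<bar>f x\<bar>"
      by (simp add: abs_mult[symmetric] abs_triangle_ineq4)
    also have "\<dots> \<le> \<bar>A\<bar> * e' + \<bar>A'\<bar> * e'"
      using a1 by (intro add_mono mult_left_mono) auto
    also have "\<dots> = (\<bar>A\<bar> + \<bar>A'\<bar>) * e'" by (simp add: algebra_simps)
    also have "\<dots> < (\<bar>A\<bar> + \<bar>A'\<bar> + 1) * e'" using e' by (simp add: algebra_simps)
    also have "\<dots> = e / 2" unfolding e'_def by (simp add: field_simps)
    also have "\<dots> < e" using e by simp
    finally show ?thesis .
  qed
  thus ?thesis by (intro exI[of _ "max N 1"]) auto
qed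


lemma phi_two_pos:
  assumes sh: "strongly_hyperbolic f" and A: "0 < A" "0 < A'" and d: "0 < d" and K: "0 < K"
    and u: "0 < u1" "u1 < u2"
    and z1: "A * f (u1 + d) - A' * f u1 + K = 0"
    and z2: "A * f (u2 + d) - A' * f u2 + K = 0"
  shows False
proof -
  define F where "F = (\<lambda>u. A * f (u + d) - A' * f u + K)"
  have ftop: "filterlim f at_top (at_right 0)" using sh unfolding strongly_hyperbolic_def by auto
  have "eventually (\<lambda>x. (A * f d + K) / A' + 1 \<le> f x) (at_right 0)"
    using ftop by (simp add: filterlim_at_top)
  then obtain b where b: "b > 0" "\<And>y. 0 < y \<Longrightarrow> y < b \<Longrightarrow> (A * f d + K) / A' + 1 \<le> f y"
    unfolding eventually_at_right_field by auto
  define x0 where "x0 = min b u1 / 2"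
  have x0: "0 < x0" "x0 < u1" "x0 < b" using b u by (auto simp: x0_def)
  have "(A * f d + K) / A' + 1 \<le> f x0" using b x0 by auto
  hence "A * f d + K + A' \<le> A' * f x0" using A by (simp add: field_simps)
  moreover have "f (x0 + d) < f d" using sh_decr[OF sh, of d "x0 + d"] d x0 by auto
  moreover have "A * f (x0 + d) < A * f d" using A calculation(2) by simp
  ultimately have F0: "F x0 < 0" using A unfolding F_def by linarith
  obtain N where N: "\<forall>x\<ge>N. \<bar>A * f (x + d) - A' * f x\<bar> < K" using phi_tail[OF sh d K, of A A'] by auto
  define x3 where "x3 = max N (u2 + 1)"
  have x3a: "u2 < x3" unfolding x3_def by auto
  have "\<bar>A * f (x3 + d) - A' * f x3\<bar> < K" using N unfolding x3_def by auto
  hence x3: "u2 < x3" "0 < F x3" using x3a unfolding F_def by (auto simp: abs_less_iff)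
  have der: "\<And>t. x0 \<le> t \<Longrightarrow> t \<le> x3 \<Longrightarrow> (F has_real_derivative (A * deriv f (t + d) - A' * deriv f t)) (at t)"
    unfolding F_def using phi_deriv[OF sh _ d] x0 by auto
  have "F u1 = 0" "F u2 = 0" using z1 z2 unfolding F_def by auto
  hence "\<exists>p q. x0 < p \<and> p < x3 \<and> x0 < q \<and> q < x3 \<and> p \<noteq> q \<and>
      A * deriv f (p + d) - A' * deriv f p = 0 \<and> A * deriv f (q + d) - A' * deriv f q = 0"
    using four_point[where xa=x0 and xd=x3 and xb=u1 and xc=u2, OF der] x0 x3 u F0 by blast
  then obtain p q where pq: "x0 < p" "x0 < q" "p \<noteq> q"
    "A * deriv f (p + d) - A' * deriv f p = 0" "A * deriv f (q + d) - A' * deriv f q = 0"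
    by blast
  have "p = q" using crit_unique[OF sh A d, of p q] pq x0 by auto
  thus False using pq by auto
qed

lemma phi_two_zero:
  assumes sh: "strongly_hyperbolic f" and A: "0 < A" "0 < A'" and d: "0 < d"
    and u: "0 < u1" "u1 < u2"
    and z1: "A * f (u1 + d) - A' * f u1 = 0"
    and z2: "A * f (u2 + d) - A' * f u2 = 0"
  shows False
proof -
  define F where "F = (\<lambda>u. A * f (u + d) - A' * f u)"
  have der: "(F has_real_derivative (A * deriv f (t + d) - A' * deriv f t)) (at t)" if "u1 \<le> t" for t
    unfolding F_def using phi_deriv[of f t d A A' 0] sh u that d by simp
  obtain p where p: "u1 < p" "p < u2" "A * deriv f (p + d) - A' * deriv f p = 0"
    using rolle_eq[OF der u(2)] z1 z2 unfolding F_def by auto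
  have der2: "\<And>t. u2 \<le> t \<Longrightarrow> (F has_real_derivative (A * deriv f (t + d) - A' * deriv f t)) (at t)"
    using der u by auto
  have F2: "F u2 = 0" using z2 unfolding F_def by simp
  have tl: "\<exists>N. \<forall>x\<ge>N. \<bar>F x\<bar> < e" if "0 < e" for e
    using phi_tail[OF sh d that, of A A'] unfolding F_def by blast
  obtain q where q: "u2 < q" "A * deriv f (q + d) - A' * deriv f q = 0"
    using crit_after[where u=u2, OF der2 F2 tl] by blast
  have "p = q" using crit_unique[OF sh A d, of p q] p q u by auto
  thus False using p q by auto
qed

lemma phi_three:
  assumes sh: "strongly_hyperbolic f" and A: "0 < A" "0 < A'" and d: "0 < d"
    and u: "0 < u1" "u1 < u2" "u2 < u3"
    and z1: "A * f (u1 + d) - A' * f u1 + K = 0"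
    and z2: "A * f (u2 + d) - A' * f u2 + K = 0"
    and z3: "A * f (u3 + d) - A' * f u3 + K = 0"
  shows False
proof -
  define F where "F = (\<lambda>u. A * f (u + d) - A' * f u + K)"
  define D where "D = (\<lambda>t. A * deriv f (t + d) - A' * deriv f t)"
  have der: "\<And>t. u1 \<le> t \<Longrightarrow> (F has_real_derivative D t) (at t)"
    unfolding F_def D_def using phi_deriv[OF sh _ d] u by auto
  obtain p where p: "u1 < p" "p < u2" "D p = 0"
    using rolle_eq[of u1 u2 F D] der u z1 z2 unfolding F_def by auto
  obtain q where q: "u2 < q" "q < u3" "D q = 0"
    using rolle_eq[of u2 u3 F D] der u z2 z3 unfolding F_def by auto
  have "p = q" using crit_unique[OF sh A d, of p q] p q u by (auto simp: D_def)
  thus False using p q by auto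
qed



lemma fabc_R: "- b < x \<Longrightarrow> f_abc f1 f2 a b c x = a * f1 (x + b) + c"
  by (simp add: f_abc_def)
lemma fabc_L: "x < - b \<Longrightarrow> f_abc f1 f2 a b c x = - a * f2 (- x - b) + c"
  by (simp add: f_abc_def)

lemma lin3:
  fixes P1 P2 Q1 Q2 R1 R2 K x y z :: real
  assumes "P1 * (z - x) < (z - y) * Q1 + (y - x) * R1" "P2 * (z - x) < (z - y) * Q2 + (y - x) * R2"
    "P1 + P2 = K" "Q1 + Q2 = K" "R1 + R2 = K"
  shows False
proof -
  have "(P1 + P2) * (z - x) < (z - y) * (Q1 + Q2) + (y - x) * (R1 + R2)"
    using add_strict_mono[OF assms(1) assms(2)] by (simp add: algebra_simps)
  hence "K * (z - x) < (z - y) * K + (y - x) * K" using assms(3-5) by simp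
  thus False by (simp add: algebra_simps)
qed

context
  fixes f1 f2 :: "real \<Rightarrow> real"
  assumes sh1: "strongly_hyperbolic f1" and sh2: "strongly_hyperbolic f2"
begin

lemma GL_three:
  assumes a: "0 < a" and s: "s < 0" and o: "x < y" "y < z"
    and n: "x \<noteq> - b" "y \<noteq> - b" "z \<noteq> - b"
    and zx: "f_abc f1 f2 a b c x = s * x + t"
    and zy: "f_abc f1 f2 a b c y = s * y + t"
    and zz: "f_abc f1 f2 a b c z = s * z + t"
  shows False
proof -
  have side: False if vw: "v < - b" "- b < w" "v < w"
    and zv: "f_abc f1 f2 a b c v = s * v + t" and zw: "f_abc f1 f2 a b c w = s * w + t" for v w
  proof -
    have "0 < f1 (w + b)" "0 < f2 (- v - b)" using sh_pos[OF sh1] sh_pos[OF sh2] vw by auto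
    hence "0 < a * f1 (w + b)" "0 < a * f2 (- v - b)" using a by auto
    hence "c < s * w + t" "s * v + t < c" using zv zw fabc_R[of b w] fabc_L[of v b] vw
      by auto
    moreover have "s * w < s * v" using vw s by simp
    ultimately show False by linarith
  qed
  consider "z < - b" | "- b < x" | "x < - b" "- b < z"
    using n o by (smt (verit))
  thus False
  proof cases
    case 1
    have ch: "f2 (- y - b) * ((- x - b) - (- z - b)) < ((- x - b) - (- y - b)) * f2 (- z - b) + ((- y - b) - (- z - b)) * f2 (- x - b)"
      by (rule sc_chord[OF sh_sc[OF sh2]]) (use 1 o in auto)
    have ch2: "(- a * f2 (- y - b)) * (z - x) > (y - x) * (- a * f2 (- z - b)) + (z - y) * (- a * f2 (- x - b))"
    proof -
      have "a * (f2 (- y - b) * (z - x)) < a * ((y - x) * f2 (- z - b) + (z - y) * f2 (- x - b))"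
        using ch a by (intro mult_strict_left_mono) (auto simp: algebra_simps)
      thus ?thesis by (simp add: algebra_simps)
    qed
    have e: "- a * f2 (- x - b) = s * x + t - c" "- a * f2 (- y - b) = s * y + t - c" "- a * f2 (- z - b) = s * z + t - c"
      using zx zy zz fabc_L[of x b] fabc_L[of y b] fabc_L[of z b] 1 o by auto
    have "(s * y + t - c) * (z - x) > (y - x) * (s * z + t - c) + (z - y) * (s * x + t - c)"
      using ch2 unfolding e .
    thus False by (simp add: algebra_simps)
  next
    case 2
    have ch: "f1 (y + b) * ((z + b) - (x + b)) < ((z + b) - (y + b)) * f1 (x + b) + ((y + b) - (x + b)) * f1 (z + b)"
      by (rule sc_chord[OF sh_sc[OF sh1]]) (use 2 o in auto)
    have ch2: "(a * f1 (y + b)) * (z - x) < (z - y) * (a * f1 (x + b)) + (y - x) * (a * f1 (z + b))"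
    proof -
      have "a * (f1 (y + b) * (z - x)) < a * ((z - y) * f1 (x + b) + (y - x) * f1 (z + b))"
        using ch a by (intro mult_strict_left_mono) (auto simp: algebra_simps)
      thus ?thesis by (simp add: algebra_simps)
    qed
    have e: "a * f1 (x + b) = s * x + t - c" "a * f1 (y + b) = s * y + t - c" "a * f1 (z + b) = s * z + t - c"
      using zx zy zz fabc_R[of b x] fabc_R[of b y] fabc_R[of b z] 2 o by auto
    have "(s * y + t - c) * (z - x) < (z - y) * (s * x + t - c) + (y - x) * (s * z + t - c)"
      using ch2 unfolding e .
    thus False by (simp add: algebra_simps)
  next
    case 3
    show False using side[of x z] 3 o zx zz by auto
  qed
qed


lemma GG_main:
  assumes a: "0 < a" "0 < a'" and bb: "b' < b" and cc: "c \<noteq> c'"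
    and o: "x < y" "y < z"
    and zer: "\<And>w. w \<in> {x, y, z} \<Longrightarrow> w \<noteq> - b \<and> w \<noteq> - b' \<and> f_abc f1 f2 a b c w = f_abc f1 f2 a' b' c' w"
  shows False
proof -
  define d where "d = b - b'"
  have d: "0 < d" using bb by (simp add: d_def)
  define Rz where "Rz v \<longleftrightarrow> 0 < v + b' \<and> a * f1 ((v + b') + d) - a' * f1 (v + b') + (c - c') = 0" for v
  define Lz where "Lz v \<longleftrightarrow> 0 < - v - b \<and> a' * f2 ((- v - b) + d) - a * f2 (- v - b) + (c - c') = 0" for v
  define Mz where "Mz v \<longleftrightarrow> 0 < v + b \<and> v + b < d \<and> 0 < - v - b' \<and> - v - b' < d \<and>
       a * f1 (v + b) + a' * f2 (- v - b') + (c - c') = 0" for v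
  have reg: "Rz w \<or> Lz w \<or> Mz w" if "w \<in> {x, y, z}" for w
  proof -
    have w: "w \<noteq> - b" "w \<noteq> - b'" "f_abc f1 f2 a b c w = f_abc f1 f2 a' b' c' w" using zer[OF that] by auto
    have e1: "(w + b') + d = w + b" "(- w - b) + d = - w - b'" by (simp_all add: d_def)
    consider "- b' < w" | "- b < w" "w < - b'" | "w < - b" using w bb by (smt (verit))
    thus ?thesis
    proof cases
      case 1
      hence "Rz w" using w(3) fabc_R[of b w] fabc_R[of b' w] bb unfolding Rz_def e1 by auto
      thus ?thesis by auto
    next
      case 2
      hence "Mz w" using w(3) fabc_R[of b w] fabc_L[of w b'] bb unfolding Mz_def d_def by auto
      thus ?thesis by auto
    next
      case 3
      hence "Lz w" using w(3) fabc_L[of w b] fabc_L[of w b'] bb unfolding Lz_def e1 by auto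
      thus ?thesis by auto
    qed
  qed
  show False
  proof (cases "c' < c")
    case True
    have K: "0 < c - c'" using True by simp
    have RR: False if "Rz v" "Rz w" "v < w" for v w
      using phi_two_pos[OF sh1 a d K, of "v + b'" "w + b'"] that unfolding Rz_def by auto
    have LL: False if "Lz v" "Lz w" "v < w" for v w
      using phi_two_pos[OF sh2 a(2) a(1) d K, of "- w - b" "- v - b"] that unfolding Lz_def by auto
    have MM: False if "Mz v" for v
    proof -
      have "0 < f1 (v + b)" "0 < f2 (- v - b')" using that sh_pos[OF sh1] sh_pos[OF sh2] unfolding Mz_def by auto
      hence "0 < a * f1 (v + b)" "0 < a' * f2 (- v - b')" using a by auto
      thus False using that K unfolding Mz_def by linarith
    qed
    show False using reg[of x] reg[of y] reg[of z] o RR LL MM by (metis insertCI order.strict_trans)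
  next
    case False
    hence K: "0 < c' - c" using cc by simp
    have Rp: "a' < a \<and> c' - c < a * f1 d" if "Rz v" for v
    proof -
      define u where "u = v + b'"
      have u: "0 < u" "a * f1 (u + d) - a' * f1 u = c' - c" using that unfolding Rz_def u_def by auto
      have f: "f1 (u + d) < f1 u" "f1 (u + d) < f1 d" "0 < f1 u" "0 < f1 (u + d)"
        using sh_decr[OF sh1, of u "u + d"] sh_decr[OF sh1, of d "u + d"] sh_pos[OF sh1, of u] sh_pos[OF sh1, of "u + d"] u d by auto
      have "a * f1 (u + d) < a * f1 u" "a * f1 (u + d) < a * f1 d" using f a by auto
      hence "a' * f1 u < a * f1 u" using u K by linarith
      hence "a' < a" using f by simp
      moreover have "0 < a' * f1 u" using a f by simp
      ultimately show ?thesis using u \<open>a * f1 (u + d) < a * f1 d\<close> by linarith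
    qed
    have Lp: "a < a' \<and> c' - c < a' * f2 d" if "Lz v" for v
    proof -
      define u where "u = - v - b"
      have u: "0 < u" "a' * f2 (u + d) - a * f2 u = c' - c" using that unfolding Lz_def u_def by auto
      have f: "f2 (u + d) < f2 u" "f2 (u + d) < f2 d" "0 < f2 u" "0 < f2 (u + d)"
        using sh_decr[OF sh2, of u "u + d"] sh_decr[OF sh2, of d "u + d"] sh_pos[OF sh2, of u] sh_pos[OF sh2, of "u + d"] u d by auto
      have "a' * f2 (u + d) < a' * f2 u" "a' * f2 (u + d) < a' * f2 d" using f a by auto
      hence "a * f2 u < a' * f2 u" using u K by linarith
      hence "a < a'" using f by simp
      moreover have "0 < a * f2 u" using a f by simp
      ultimately show ?thesis using u \<open>a' * f2 (u + d) < a' * f2 d\<close> by linarith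
    qed
    have Mp: "a * f1 d < c' - c \<and> a' * f2 d < c' - c" if "Mz v" for v
    proof -
      have m: "0 < v + b" "v + b < d" "0 < - v - b'" "- v - b' < d"
        "a * f1 (v + b) + a' * f2 (- v - b') = c' - c" using that unfolding Mz_def by auto
      have "f1 d < f1 (v + b)" "f2 d < f2 (- v - b')" "0 < f1 (v + b)" "0 < f2 (- v - b')"
        using sh_decr[OF sh1, of "v + b" d] sh_decr[OF sh2, of "- v - b'" d] sh_pos[OF sh1, of "v + b"] sh_pos[OF sh2, of "- v - b'"] m by auto
      hence "a * f1 d < a * f1 (v + b)" "a' * f2 d < a' * f2 (- v - b')" "0 < a * f1 (v + b)" "0 < a' * f2 (- v - b')"
        using a by auto
      thus ?thesis using m by linarith
    qed
    have RL: False if "Rz v" "Lz w" for v w using Rp[OF that(1)] Lp[OF that(2)] by auto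
    have RM: False if "Rz v" "Mz w" for v w using Rp[OF that(1)] Mp[OF that(2)] by auto
    have LM: False if "Lz v" "Mz w" for v w using Lp[OF that(1)] Mp[OF that(2)] by auto
    have RRR: False if "Rz x" "Rz y" "Rz z"
      using phi_three[OF sh1 a d, of "x + b'" "y + b'" "z + b'" "c - c'"] that o unfolding Rz_def by auto
    have LLL: False if "Lz x" "Lz y" "Lz z"
      using phi_three[OF sh2 a(2) a(1) d, of "- z - b" "- y - b" "- x - b" "c - c'"] that o unfolding Lz_def by auto
    have MMM: False if "Mz x" "Mz y" "Mz z"
    proof -
      have m: "0 < x + b" "0 < - z - b'" using that o unfolding Mz_def by auto
      have ch1: "f1 (y + b) * ((z + b) - (x + b)) < ((z + b) - (y + b)) * f1 (x + b) + ((y + b) - (x + b)) * f1 (z + b)"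
        by (rule sc_chord[OF sh_sc[OF sh1]]) (use m o in auto)
      have ch2: "f2 (- y - b') * ((- x - b') - (- z - b')) < ((- x - b') - (- y - b')) * f2 (- z - b') + ((- y - b') - (- z - b')) * f2 (- x - b')"
        by (rule sc_chord[OF sh_sc[OF sh2]]) (use m o in auto)
      have h1: "(a * f1 (y + b)) * (z - x) < (z - y) * (a * f1 (x + b)) + (y - x) * (a * f1 (z + b))"
      proof -
        have "a * (f1 (y + b) * (z - x)) < a * ((z - y) * f1 (x + b) + (y - x) * f1 (z + b))"
          using ch1 a by (intro mult_strict_left_mono) (auto simp: algebra_simps)
        thus ?thesis by (simp add: algebra_simps)
      qed
      have h2: "(a' * f2 (- y - b')) * (z - x) < (z - y) * (a' * f2 (- x - b')) + (y - x) * (a' * f2 (- z - b'))"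
      proof -
        have "a' * (f2 (- y - b') * (z - x)) < a' * ((y - x) * f2 (- z - b') + (z - y) * f2 (- x - b'))"
          using ch2 a by (intro mult_strict_left_mono) (auto simp: algebra_simps)
        thus ?thesis by (simp add: algebra_simps)
      qed
      show False
        by (rule lin3[OF h1 h2, of "c' - c"]) (use that in \<open>auto simp: Mz_def\<close>)
    qed
    show False using reg[of x] reg[of y] reg[of z] o RL RM LM RRR LLL MMM by blast
  qed
qed


lemma GG_ceq:
  assumes a: "0 < a" "0 < a'" and bb: "b' < b" and cc: "c = c'"
    and o: "x < y"
    and zer: "\<And>w. w \<in> {x, y} \<Longrightarrow> w \<noteq> - b \<and> w \<noteq> - b' \<and> f_abc f1 f2 a b c w = f_abc f1 f2 a' b' c' w"
  shows False
proof -
  define d where "d = b - b'"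
  have d: "0 < d" using bb by (simp add: d_def)
  define Rz where "Rz v \<longleftrightarrow> 0 < v + b' \<and> a * f1 ((v + b') + d) - a' * f1 (v + b') = 0" for v
  define Lz where "Lz v \<longleftrightarrow> 0 < - v - b \<and> a' * f2 ((- v - b) + d) - a * f2 (- v - b) = 0" for v
  define Mz where "Mz v \<longleftrightarrow> 0 < v + b \<and> 0 < - v - b' \<and>
       a * f1 (v + b) + a' * f2 (- v - b') = 0" for v
  have reg: "Rz w \<or> Lz w \<or> Mz w" if "w \<in> {x, y}" for w
  proof -
    have w: "w \<noteq> - b" "w \<noteq> - b'" "f_abc f1 f2 a b c w = f_abc f1 f2 a' b' c' w" using zer[OF that] by auto
    have e1: "(w + b') + d = w + b" "(- w - b) + d = - w - b'" by (simp_all add: d_def)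
    consider "- b' < w" | "- b < w" "w < - b'" | "w < - b" using w bb by (smt (verit))
    thus ?thesis
    proof cases
      case 1
      hence "Rz w" using w(3) fabc_R[of b w] fabc_R[of b' w] bb cc unfolding Rz_def e1 by auto
      thus ?thesis by auto
    next
      case 2
      hence "Mz w" using w(3) fabc_R[of b w] fabc_L[of w b'] bb cc unfolding Mz_def by auto
      thus ?thesis by auto
    next
      case 3
      hence "Lz w" using w(3) fabc_L[of w b] fabc_L[of w b'] bb cc unfolding Lz_def e1 by auto
      thus ?thesis by auto
    qed
  qed
  have RR: False if "Rz v" "Rz w" "v < w" for v w
    using phi_two_zero[OF sh1 a d, of "v + b'" "w + b'"] that unfolding Rz_def by auto
  have LL: False if "Lz v" "Lz w" "v < w" for v w
    using phi_two_zero[OF sh2 a(2) a(1) d, of "- w - b" "- v - b"] that unfolding Lz_def by auto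
  have MM: False if "Mz v" for v
  proof -
    have "0 < f1 (v + b)" "0 < f2 (- v - b')" using that sh_pos[OF sh1] sh_pos[OF sh2] unfolding Mz_def by auto
    hence "0 < a * f1 (v + b)" "0 < a' * f2 (- v - b')" using a by auto
    thus False using that unfolding Mz_def by linarith
  qed
  have Rp: "a' < a" if "Rz v" for v
  proof -
    define u where "u = v + b'"
    have u: "0 < u" "a * f1 (u + d) = a' * f1 u" using that unfolding Rz_def u_def by auto
    have f: "f1 (u + d) < f1 u" "0 < f1 u"
      using sh_decr[OF sh1, of u "u + d"] sh_pos[OF sh1, of u] u d by auto
    have "a * f1 (u + d) < a * f1 u" using f a by auto
    hence "a' * f1 u < a * f1 u" using u by linarith
    thus "a' < a" using f by simp
  qed
  have Lp: "a < a'" if "Lz v" for v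
  proof -
    define u where "u = - v - b"
    have u: "0 < u" "a' * f2 (u + d) = a * f2 u" using that unfolding Lz_def u_def by auto
    have f: "f2 (u + d) < f2 u" "0 < f2 u"
      using sh_decr[OF sh2, of u "u + d"] sh_pos[OF sh2, of u] u d by auto
    have "a' * f2 (u + d) < a' * f2 u" using f a by auto
    hence "a * f2 u < a' * f2 u" using u by linarith
    thus "a < a'" using f by simp
  qed
  show False using reg[of x] reg[of y] o RR LL MM Rp Lp by (metis insertCI order.asym)
qed

lemma GG_beq:
  assumes a: "0 < a" "0 < a'" and cc: "c \<noteq> c'"
    and o: "x < y"
    and zer: "\<And>w. w \<in> {x, y} \<Longrightarrow> w \<noteq> - b \<and> f_abc f1 f2 a b c w = f_abc f1 f2 a' b c' w"
  shows False
proof -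
  have reg: "(- b < w \<and> (a - a') * f1 (w + b) = c' - c) \<or> (w < - b \<and> (a - a') * f2 (- w - b) = c - c')"
    if "w \<in> {x, y}" for w
  proof -
    have w: "w \<noteq> - b" "f_abc f1 f2 a b c w = f_abc f1 f2 a' b c' w" using zer[OF that] by auto
    show ?thesis
    proof (cases "- b < w")
      case True
      thus ?thesis using w fabc_R[of b w] by (auto simp: algebra_simps)
    next
      case False
      hence "w < - b" using w by auto
      thus ?thesis using w fabc_L[of w b] by (auto simp: algebra_simps)
    qed
  qed
  have aa: "a \<noteq> a'" if "w \<in> {x, y}" for w using reg[OF that] cc by auto
  have RR: False if "- b < v" "- b < w" "v < w" "(a - a') * f1 (v + b) = c' - c" "(a - a') * f1 (w + b) = c' - c" "a \<noteq> a'" for v w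
  proof -
    have "(a - a') * f1 (v + b) = (a - a') * f1 (w + b)" using that by simp
    hence "f1 (v + b) = f1 (w + b)" using that(6) by simp
    thus False using sh_decr[OF sh1, of "v + b" "w + b"] that by auto
  qed
  have LL: False if "v < - b" "w < - b" "v < w" "(a - a') * f2 (- v - b) = c - c'" "(a - a') * f2 (- w - b) = c - c'" "a \<noteq> a'" for v w
  proof -
    have "(a - a') * f2 (- v - b) = (a - a') * f2 (- w - b)" using that by simp
    hence "f2 (- v - b) = f2 (- w - b)" using that(6) by simp
    thus False using sh_decr[OF sh2, of "- w - b" "- v - b"] that by auto
  qed
  have RL: False if "- b < v" "w < - b" "(a - a') * f1 (v + b) = c' - c" "(a - a') * f2 (- w - b) = c - c'" for v w
  proof -
    have p: "0 < f1 (v + b)" "0 < f2 (- w - b)" using sh_pos[OF sh1] sh_pos[OF sh2] that by auto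
    have "(a - a') * (f1 (v + b) + f2 (- w - b)) = 0" using that by (simp add: algebra_simps)
    hence "a = a'" using p by (simp add: add_pos_pos)
    thus False using that cc by simp
  qed
  show False using reg[of x] reg[of y] o aa[of x] RR[of x y] LL[of x y] RL[of x y] RL[of y x] by auto
qed

lemma GG_same:
  assumes aa: "a \<noteq> a'"
    and zer: "w \<noteq> - b" "f_abc f1 f2 a b c w = f_abc f1 f2 a' b c w"
  shows False
proof (cases "- b < w")
  case True
  hence "(a - a') * f1 (w + b) = 0" using zer fabc_R[of b w] by (auto simp: algebra_simps)
  thus False using sh_pos[OF sh1, of "w + b"] True aa by auto
next
  case False
  hence "w < - b" using zer by auto
  hence "(a - a') * f2 (- w - b) = 0" using zer fabc_L[of w b] by (auto simp: algebra_simps)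
  thus False using sh_pos[OF sh2, of "- w - b"] \<open>w < - b\<close> aa by auto
qed

end


lemma sub2: "S \<subseteq> {p, q} \<Longrightarrow> finite S \<and> card S \<le> 2"
proof -
  assume S: "S \<subseteq> {p, q}"
  have "card {p, q} \<le> 2" by (cases "p = q") auto
  thus ?thesis using S finite_subset[OF S] card_mono[OF _ S] by auto
qed

lemma no3:
  fixes Z :: "real set"
  assumes h: "\<And>x y z. x \<in> Z \<Longrightarrow> y \<in> Z \<Longrightarrow> z \<in> Z \<Longrightarrow> x < y \<Longrightarrow> y < z \<Longrightarrow> False"
  shows "\<exists>p q. Z \<subseteq> {p, q}"
proof (cases "Z = {}")
  case True thus ?thesis by auto
next
  case False
  then obtain p where p: "p \<in> Z" by auto
  show ?thesis
  proof (cases "Z \<subseteq> {p}")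
    case True thus ?thesis by auto
  next
    case False
    then obtain q where q: "q \<in> Z" "q \<noteq> p" by auto
    have "Z \<subseteq> {p, q}"
    proof
      fix r assume r: "r \<in> Z"
      show "r \<in> {p, q}"
      proof (rule ccontr)
        assume "r \<notin> {p, q}"
        hence "r \<noteq> p" "r \<noteq> q" by auto
        thus False using h[OF p q(1) r] h[OF p r q(1)] h[OF q(1) p r] h[OF q(1) r p] h[OF r p q(1)] h[OF r q(1) p] q(2)
          by (meson linorder_neqE_linordered_idom)
      qed
    qed
    thus ?thesis by auto
  qed
qed

lemma no2:
  fixes Z :: "real set"
  assumes h: "\<And>x y. x \<in> Z \<Longrightarrow> y \<in> Z \<Longrightarrow> x < y \<Longrightarrow> False"
  shows "\<exists>p. Z \<subseteq> {p}"
proof (cases "Z = {}")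
  case True thus ?thesis by auto
next
  case False
  then obtain p where p: "p \<in> Z" by auto
  have "Z \<subseteq> {p}"
  proof
    fix r assume r: "r \<in> Z"
    show "r \<in> {p}" using h[OF p r] h[OF r p] by (cases "r < p") (auto simp: not_less_iff_gr_or_eq)
  qed
  thus ?thesis by auto
qed

lemma mem_graph:
  "(Fin x, Fin y) \<in> graph_abc f1 f2 a b c \<longleftrightarrow> x \<noteq> - b \<and> y = f_abc f1 f2 a b c x"
  "(Fin x, Infty) \<in> graph_abc f1 f2 a b c \<longleftrightarrow> x = - b"
  "(Infty, Fin y) \<in> graph_abc f1 f2 a b c \<longleftrightarrow> y = c"
  "(Infty, Infty) \<notin> graph_abc f1 f2 a b c"
  unfolding graph_abc_def by auto

lemma mem_line:
  "(Fin x, Fin y) \<in> line_st s t \<longleftrightarrow> y = s * x + t"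
  "(Fin x, Infty) \<notin> line_st s t"
  "(Infty, Fin y) \<notin> line_st s t"
  "(Infty, Infty) \<in> line_st s t"
  unfolding line_st_def by auto

lemma inter_LL:
  assumes "(s, t) \<noteq> (s', t')"
  shows "finite (line_st s t \<inter> line_st s' t') \<and> card (line_st s t \<inter> line_st s' t') \<le> 2"
proof -
  define Z where "Z = {x. s * x + t = s' * x + t'}"
  have "\<exists>p. Z \<subseteq> {p}"
  proof (rule no2)
    fix x y assume "x \<in> Z" "y \<in> Z" "x < y"
    hence e: "s * x + t = s' * x + t'" "s * y + t = s' * y + t'" unfolding Z_def by auto
    hence "(s - s') * (y - x) = 0" by (simp add: algebra_simps)
    hence "s = s'" using \<open>x < y\<close> by simp
    thus False using e assms by simp
  qed
  then obtain p where p: "Z \<subseteq> {p}" by auto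
  have pz: "x = p" if "s * x + t = s' * x + t' \<or> s' * x + t' = s * x + t" for x
  proof -
    have "x \<in> Z" using that unfolding Z_def by auto
    thus ?thesis using p by auto
  qed
  have "line_st s t \<inter> line_st s' t' \<subseteq> {(Infty, Infty), (Fin p, Fin (s * p + t))}"
  proof
    fix P assume P: "P \<in> line_st s t \<inter> line_st s' t'"
    obtain X Y where XY: "P = (X, Y)" by fastforce
    show "P \<in> {(Infty, Infty), (Fin p, Fin (s * p + t))}"
      using P pz unfolding XY
      by (cases X; cases Y) (auto simp: mem_line)
  qed
  thus ?thesis by (rule sub2)
qed

lemma inter_GL:
  assumes sh1: "strongly_hyperbolic f1" and sh2: "strongly_hyperbolic f2" and a: "0 < a" and s: "s < 0"
  shows "finite (graph_abc f1 f2 a b c \<inter> line_st s t) \<and> card (graph_abc f1 f2 a b c \<inter> line_st s t) \<le> 2"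
proof -
  define Z where "Z = {x. x \<noteq> - b \<and> f_abc f1 f2 a b c x = s * x + t}"
  have "\<exists>p q. Z \<subseteq> {p, q}"
    by (rule no3) (use GL_three[OF sh1 sh2 a s] in \<open>auto simp: Z_def\<close>)
  then obtain p q where p: "Z \<subseteq> {p, q}" by auto
  have "graph_abc f1 f2 a b c \<inter> line_st s t \<subseteq> {(Fin p, Fin (s * p + t)), (Fin q, Fin (s * q + t))}"
  proof
    fix P assume P: "P \<in> graph_abc f1 f2 a b c \<inter> line_st s t"
    obtain X Y where XY: "P = (X, Y)" by fastforce
    show "P \<in> {(Fin p, Fin (s * p + t)), (Fin q, Fin (s * q + t))}"
      using P p unfolding XY Z_def
      by (cases X; cases Y) (auto simp: mem_line mem_graph)
  qed
  thus ?thesis by (rule sub2)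
qed

lemma inter_GG:
  assumes sh1: "strongly_hyperbolic f1" and sh2: "strongly_hyperbolic f2" and a: "0 < a" "0 < a'"
    and ne: "(a, b, c) \<noteq> (a', b', c')"
  shows "finite (graph_abc f1 f2 a b c \<inter> graph_abc f1 f2 a' b' c') \<and>
         card (graph_abc f1 f2 a b c \<inter> graph_abc f1 f2 a' b' c') \<le> 2"
proof -
  define Z where "Z = {x. x \<noteq> - b \<and> x \<noteq> - b' \<and> f_abc f1 f2 a b c x = f_abc f1 f2 a' b' c' x}"
  define img where "img x = (Fin x, Fin (f_abc f1 f2 a b c x))" for x
  have sub: "graph_abc f1 f2 a b c \<inter> graph_abc f1 f2 a' b' c' \<subseteq> img ` Z \<union>
      (if b = b' then {(Fin (- b), Infty)} else {}) \<union> (if c = c' then {(Infty, Fin c)} else {})"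
  proof
    fix P assume P: "P \<in> graph_abc f1 f2 a b c \<inter> graph_abc f1 f2 a' b' c'"
    obtain X Y where XY: "P = (X, Y)" by fastforce
    show "P \<in> img ` Z \<union> (if b = b' then {(Fin (- b), Infty)} else {}) \<union> (if c = c' then {(Infty, Fin c)} else {})"
      using P unfolding XY
      by (cases X; cases Y) (auto simp: mem_graph Z_def img_def)
  qed
  show ?thesis
  proof (cases "b = b'")
    case bb: True
    show ?thesis
    proof (cases "c = c'")
      case cc: True
      have "a \<noteq> a'" using ne bb cc by auto
      hence "Z = {}" using GG_same[OF sh1 sh2, of a a' _ b c] bb cc unfolding Z_def by auto
      hence "graph_abc f1 f2 a b c \<inter> graph_abc f1 f2 a' b' c' \<subseteq> {(Fin (- b), Infty), (Infty, Fin c)}"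
        using sub bb cc by auto
      thus ?thesis by (rule sub2)
    next
      case cc: False
      have "\<exists>p. Z \<subseteq> {p}"
      proof (rule no2)
        fix x y assume xy: "x \<in> Z" "y \<in> Z" "x < y"
        show False by (rule GG_beq[OF sh1 sh2 a cc xy(3), of b]) (use xy bb in \<open>auto simp: Z_def\<close>)
      qed
      then obtain p where "Z \<subseteq> {p}" by auto
      hence "graph_abc f1 f2 a b c \<inter> graph_abc f1 f2 a' b' c' \<subseteq> {img p, (Fin (- b), Infty)}"
        using sub bb cc by auto
      thus ?thesis by (rule sub2)
    qed
  next
    case bb: False
    have zsym: "(x \<in> Z) = (x \<noteq> - b' \<and> x \<noteq> - b \<and> f_abc f1 f2 a' b' c' x = f_abc f1 f2 a b c x)" for x
      unfolding Z_def by auto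
    show ?thesis
    proof (cases "c = c'")
      case cc: True
      have "\<exists>p. Z \<subseteq> {p}"
      proof (rule no2)
        fix x y assume xy: "x \<in> Z" "y \<in> Z" "x < y"
        show False
        proof (cases "b' < b")
          case True
          show False by (rule GG_ceq[OF sh1 sh2 a True cc xy(3)]) (use xy in \<open>auto simp: Z_def\<close>)
        next
          case False
          hence "b < b'" using bb by auto
          show False by (rule GG_ceq[OF sh1 sh2 a(2) a(1) \<open>b < b'\<close> cc[symmetric] xy(3)]) (use xy in \<open>auto simp: zsym\<close>)
        qed
      qed
      then obtain p where "Z \<subseteq> {p}" by auto
      hence "graph_abc f1 f2 a b c \<inter> graph_abc f1 f2 a' b' c' \<subseteq> {img p, (Infty, Fin c)}"
        using sub bb cc by auto
      thus ?thesis by (rule sub2)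
    next
      case cc: False
      have "\<exists>p q. Z \<subseteq> {p, q}"
      proof (rule no3)
        fix x y z assume xy: "x \<in> Z" "y \<in> Z" "z \<in> Z" "x < y" "y < z"
        show False
        proof (cases "b' < b")
          case True
          show False by (rule GG_main[OF sh1 sh2 a True cc xy(4,5)]) (use xy in \<open>auto simp: Z_def\<close>)
        next
          case False
          hence "b < b'" using bb by auto
          have "c' \<noteq> c" using cc by auto
          show False by (rule GG_main[OF sh1 sh2 a(2) a(1) \<open>b < b'\<close> \<open>c' \<noteq> c\<close> xy(4,5)]) (use xy in \<open>auto simp: zsym\<close>)
        qed
      qed
      then obtain p q where "Z \<subseteq> {p, q}" by auto
      hence "graph_abc f1 f2 a b c \<inter> graph_abc f1 f2 a' b' c' \<subseteq> {img p, img q}"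
        using sub bb cc by auto
      thus ?thesis by (rule sub2)
    qed
  qed
qed

theorem theorem4p8:
  fixes f1 f2 :: "real \<Rightarrow> real"
  assumes "strongly_hyperbolic f1" and "strongly_hyperbolic f2"
    and "C \<in> Cminus f1 f2" and "D \<in> Cminus f1 f2" and "C \<noteq> D"
  shows "finite (C \<inter> D) \<and> card (C \<inter> D) \<le> 2"
proof -
  note sh = assms(1,2)
  consider (G) a b c where "a > 0" "C = graph_abc f1 f2 a b c" | (L) s t where "s < 0" "C = line_st s t"
    using assms(3) unfolding Cminus_def by blast
  thus ?thesis
  proof cases
    case G
    consider (G') a' b' c' where "a' > 0" "D = graph_abc f1 f2 a' b' c'" | (L') s' t' where "s' < 0" "D = line_st s' t'"
      using assms(4) unfolding Cminus_def by blast
    thus ?thesis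
    proof cases
      case G'
      have "(a, b, c) \<noteq> (a', b', c')" using G G' assms(5) by auto
      thus ?thesis using inter_GG[OF sh G(1) G'(1)] G G' by simp
    next
      case L'
      thus ?thesis using inter_GL[OF sh G(1) L'(1)] G by simp
    qed
  next
    case L
    consider (G') a' b' c' where "a' > 0" "D = graph_abc f1 f2 a' b' c'" | (L') s' t' where "s' < 0" "D = line_st s' t'"
      using assms(4) unfolding Cminus_def by blast
    thus ?thesis
    proof cases
      case G'
      thus ?thesis using inter_GL[OF sh G'(1) L(1)] L by (simp add: Int_commute)
    next
      case L'
      have "(s, t) \<noteq> (s', t')" using L L' assms(5) by auto
      thus ?thesis using inter_LL L L' by simp
    qed
  qed
qed


end
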